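(* Let $\mathcal{X}=\mathbb{R}^d$. Let $\widehat P_X,\widehat P'_X$ be empirical distributions of points $X_1,\dots,X_{n_1}$ and $X'_1,\dots,X'_{n_2}$ in $\mathbb{R}^d$, let $x,x'\in\mathbb{R}^d$, $\tilde x=(\widehat P_X,x)$, $\tilde x'=(\widehat P'_X,x')$. Let $k'_X(x,y)=\exp(-\|x-y\|^2/(2\sigma'^2))$, $\Psi(\widehat P)=\frac1{|\widehat P|}\sum_i k'_X(X_i,\cdot)$ its kernel mean embedding, and $$\bar k(\tilde x,\tilde x')=\exp\Big(-\frac{\|\Psi(\widehat P_X)-\Psi(\widehat P'_X)\|^2_{\mathcal{H}_{k'_X}}}{2\sigma_P^2}\Big)\exp\Big(-\frac{\|x-x'\|^2}{2\sigma_X^2}\Big).$$ Draw $w_1,\dots,w_L$ i.i.d. from $N(0,\sigma'^{-2}I_d)$ and set $Z_P(\widehat P_X)=\frac{1}{n_1\sqrt L}\sum_{i=1}^{n_1}[\cos(w_1^TX_i),\sin(w_1^TX_i),\dots,\cos(w_L^TX_i),\sin(w_L^TX_i)]\in\mathbb{R}^{2L}$ (and analogously $Z_P(\widehat P'_X)$ with $n_2$, $X'_j$). Let $u=(\sigma_XZ_P(\widehat P_X),\sigma_Px)$, $u'=(\sigma_XZ_P(\widehat P'_X),\sigma_Px')\in\mathbb{R}^{2L+d}$; draw $v_1,\dots,v_Q$ i.i.d. (independently of the $w_l$) from $N(0,(\sigma_P\sigma_X)^{-2}I_{2L+d})$, and let $\bar z(\tilde x)=\frac1{\sqrt Q}[\cos(v_1^Tu),\sin(v_1^Tu),\dots,\cos(v_Q^Tu),\sin(v_Q^Tu)]$,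 $\bar z(\tilde x')$ analogously with $u'$. Then for any $\epsilon_l>0,\epsilon_q>0$, $$P\big(|\bar k(\tilde x,\tilde x')-\bar z(\tilde x)^T\bar z(\tilde x')|\ge\epsilon_l+\epsilon_q\big)\le 2\exp\Big(-\frac{Q\epsilon_q^2}{2}\Big)+6n_1n_2\exp\Big(-\frac{L\epsilon^2}{2}\Big),$$ where $\epsilon=\frac{\sigma_P^2}{2}\log(1+\epsilon_l)$ and the probability is over the random features $w_l,v_q$.
   Context: $N(0,\Sigma)$ is the centred Gaussian; these are the spectral (Fourier) distributions of the Gaussian kernels $\exp(-\|x-y\|^2/(2s^2))$ with $s=\sigma'$ and $s=\sigma_P\sigma_X$ respectively (random Fourier features). $\|\Psi(\widehat P)-\Psi(\widehat P')\|^2$ is computed via $\langle\Psi(\widehat P),\Psi(\widehat P')\rangle=\frac1{n_1n_2}\sum_{i,j}k'_X(X_i,X'_j)$. *)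

theory Defs
  imports "HOL-Probability.Probability"
begin

text \<open>Points of R^d are represented as functions nat => real, coordinates j < d.\<close>

definition sqdist :: "nat \<Rightarrow> (nat \<Rightarrow> real) \<Rightarrow> (nat \<Rightarrow> real) \<Rightarrow> real" where
  "sqdist d x y = (\<Sum>j<d. (x j - y j)^2)"

definition dotp :: "nat \<Rightarrow> (nat \<Rightarrow> real) \<Rightarrow> (nat \<Rightarrow> real) \<Rightarrow> real" where
  "dotp d x y = (\<Sum>j<d. x j * y j)"

definition gauss_kernel :: "nat \<Rightarrow> real \<Rightarrow> (nat \<Rightarrow> real) \<Rightarrow> (nat \<Rightarrow> real) \<Rightarrow> real" where
  "gauss_kernel d s x y = exp (- sqdist d x y / (2 * s^2))"

text \<open>Inner product of kernel mean embeddings of two empirical distributions,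
  <Psi(P), Psi(P')> = 1/(n1 n2) sum_{i,j} k(X_i, X'_j).\<close>
definition kme_inner :: "nat \<Rightarrow> real \<Rightarrow> nat \<Rightarrow> (nat \<Rightarrow> nat \<Rightarrow> real) \<Rightarrow> nat \<Rightarrow> (nat \<Rightarrow> nat \<Rightarrow> real) \<Rightarrow> real" where
  "kme_inner d s n1 X n2 X' =
     (\<Sum>i<n1. \<Sum>j<n2. gauss_kernel d s (X i) (X' j)) / (real n1 * real n2)"

definition kme_sqdist :: "nat \<Rightarrow> real \<Rightarrow> nat \<Rightarrow> (nat \<Rightarrow> nat \<Rightarrow> real) \<Rightarrow> nat \<Rightarrow> (nat \<Rightarrow> nat \<Rightarrow> real) \<Rightarrow> real" where
  "kme_sqdist d s n1 X n2 X' =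
     kme_inner d s n1 X n1 X + kme_inner d s n2 X' n2 X' - 2 * kme_inner d s n1 X n2 X'"

definition kbar :: "nat \<Rightarrow> real \<Rightarrow> real \<Rightarrow> real \<Rightarrow> nat \<Rightarrow> (nat \<Rightarrow> nat \<Rightarrow> real) \<Rightarrow> (nat \<Rightarrow> real)
     \<Rightarrow> nat \<Rightarrow> (nat \<Rightarrow> nat \<Rightarrow> real) \<Rightarrow> (nat \<Rightarrow> real) \<Rightarrow> real" where
  "kbar d s' sP sX n1 X x n2 X' x' =
     exp (- kme_sqdist d s' n1 X n2 X' / (2 * sP^2)) * exp (- sqdist d x x' / (2 * sX^2))"

definition rff :: "nat \<Rightarrow> nat \<Rightarrow> (nat \<times> nat \<Rightarrow> real) \<Rightarrow> (nat \<Rightarrow> real) \<Rightarrow> nat \<Rightarrow> real" where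
  "rff m D W u k =
     (let l = k div 2; t = dotp m (\<lambda>j. W (l, j)) u in
      (if k mod 2 = 0 then cos t else sin t) / sqrt (real D))"

definition ZP :: "nat \<Rightarrow> nat \<Rightarrow> (nat \<times> nat \<Rightarrow> real) \<Rightarrow> nat \<Rightarrow> (nat \<Rightarrow> nat \<Rightarrow> real) \<Rightarrow> nat \<Rightarrow> real" where
  "ZP d L W n X k = (\<Sum>i<n. rff d L W (X i) k) / real n"

definition uvec :: "nat \<Rightarrow> nat \<Rightarrow> real \<Rightarrow> real \<Rightarrow> (nat \<times> nat \<Rightarrow> real) \<Rightarrow> nat \<Rightarrow> (nat \<Rightarrow> nat \<Rightarrow> real)
     \<Rightarrow> (nat \<Rightarrow> real) \<Rightarrow> nat \<Rightarrow> real" where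
  "uvec d L sP sX W n X x k =
     (if k < 2 * L then sX * ZP d L W n X k else sP * x (k - 2 * L))"

definition rf_measure :: "nat \<Rightarrow> nat \<Rightarrow> nat \<Rightarrow> real \<Rightarrow> real \<Rightarrow> real
     \<Rightarrow> ((nat \<times> nat \<Rightarrow> real) \<times> (nat \<times> nat \<Rightarrow> real)) measure" where
  "rf_measure d L Q s' sP sX =
     (PiM ({..<L} \<times> {..<d}) (\<lambda>_. density lborel (normal_density 0 (1 / s'))))
     \<Otimes>\<^sub>M (PiM ({..<Q} \<times> {..<2 * L + d}) (\<lambda>_. density lborel (normal_density 0 (1 / (sP * sX)))))"

end

theory Submission
  imports Defs
begin

abbreviation Nrm :: "real \<Rightarrow> real measure" where
  "Nrm \<sigma> \<equiv> density lborel (normal_density 0 \<sigma>)"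

lemma Nrm_distr:
  assumes "\<sigma> > 0"
  shows "distr std_normal_distribution lborel (\<lambda>x. \<sigma> * x) = Nrm \<sigma>"
proof -
  interpret p: prob_space std_normal_distribution
    using real_dist_normal_dist real_distribution_def by blast
  have d: "distributed std_normal_distribution lborel (\<lambda>x. x) std_normal_density"
    unfolding distributed_def by (auto simp: distr_id2 cong: distr_cong)
  have "distributed std_normal_distribution lborel (\<lambda>x. 0 + \<sigma> * x) (normal_density (0 + \<sigma> * 0) (\<bar>\<sigma>\<bar> * 1))"
    by (rule p.normal_density_affine[OF d]) (use assms in auto)
  then show ?thesis using assms unfolding distributed_def by simp
qed

lemma char_Nrm:
  assumes "\<sigma> > 0"
  shows "(CLINT x|Nrm \<sigma>. iexp (t * x)) = complex_of_real (exp (- ((\<sigma> * t)^2) / 2))"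
proof -
  have "(CLINT x|Nrm \<sigma>. iexp (t * x)) = (CLINT y|std_normal_distribution. iexp (t * (\<sigma> * y)))"
    by (subst Nrm_distr[OF assms, symmetric]) (simp add: integral_distr)
  also have "\<dots> = char std_normal_distribution (\<sigma> * t)"
    unfolding char_def by (simp add: mult_ac)
  finally show ?thesis by (simp add: char_std_normal_distribution power_mult_distrib mult_ac)
qed

lemma prob_space_Nrm: "\<sigma> > 0 \<Longrightarrow> prob_space (Nrm \<sigma>)"
  by (rule prob_space_normal_density)

lemma psf_Nrm: "\<sigma> > 0 \<Longrightarrow> product_sigma_finite (\<lambda>_. Nrm \<sigma>)"
  unfolding product_sigma_finite_def
  using prob_space_Nrm prob_space_imp_sigma_finite by blast

lemma gauss_cf:
  assumes "finite J" "\<sigma> > 0"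
  shows "(\<integral>w. cos (\<Sum>j\<in>J. w j * c j) \<partial>PiM J (\<lambda>_. Nrm \<sigma>)) = exp (- (\<sigma>^2 * (\<Sum>j\<in>J. (c j)^2)) / 2)"
proof -
  interpret product_sigma_finite "\<lambda>_. Nrm \<sigma>" by (rule psf_Nrm[OF assms(2)])
  have int: "integrable (Nrm \<sigma>) (\<lambda>x. iexp (c j * x))" for j
  proof -
    interpret prob_space "Nrm \<sigma>" by (rule prob_space_Nrm[OF assms(2)])
    show ?thesis
      by (rule integrable_const_bound[where B=1]) (auto simp: norm_exp_i_times)
  qed
  have eq: "cos (\<Sum>j\<in>J. w j * c j) = Re (\<Prod>j\<in>J. iexp (c j * w j))" for w
  proof -
    have "(\<Prod>j\<in>J. iexp (c j * w j)) = exp (\<Sum>j\<in>J. \<i> * complex_of_real (c j * w j))"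
      using assms(1) by (simp add: exp_sum)
    also have "\<dots> = iexp (\<Sum>j\<in>J. w j * c j)"
      by (simp add: sum_distrib_left mult_ac)
    finally show ?thesis by (simp add: Re_exp)
  qed
  have "(\<integral>w. cos (\<Sum>j\<in>J. w j * c j) \<partial>PiM J (\<lambda>_. Nrm \<sigma>))
        = Re (\<integral>w. (\<Prod>j\<in>J. iexp (c j * w j)) \<partial>PiM J (\<lambda>_. Nrm \<sigma>))"
    unfolding eq using product_integrable_prod[of J "\<lambda>j x. iexp (c j * x)"] assms int by simp
  also have "(\<integral>w. (\<Prod>j\<in>J. iexp (c j * w j)) \<partial>PiM J (\<lambda>_. Nrm \<sigma>)) = (\<Prod>j\<in>J. CLINT x|Nrm \<sigma>. iexp (c j * x))"
    using product_integral_prod[of J "\<lambda>j x. iexp (c j * x)"] assms int by simp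
  also have "\<dots> = (\<Prod>j\<in>J. complex_of_real (exp (- ((\<sigma> * c j)^2) / 2)))"
    using char_Nrm[OF assms(2)] by simp
  also have "Re \<dots> = (\<Prod>j\<in>J. exp (- ((\<sigma> * c j)^2) / 2))"
    by (simp flip: of_real_prod)
  also have "\<dots> = exp (\<Sum>j\<in>J. - ((\<sigma> * c j)^2) / 2)"
    using exp_sum[OF assms(1), of "\<lambda>j. - ((\<sigma> * c j)^2) / 2"] by simp
  also have "(\<Sum>j\<in>J. - ((\<sigma> * c j)^2) / 2) = - (\<sigma>^2 * (\<Sum>j\<in>J. (c j)^2)) / 2"
    by (simp add: sum_distrib_left power_mult_distrib sum_divide_distrib[symmetric] sum_negf)
  finally show ?thesis .
qed

lemma block_meas:
  assumes "(i::'i) \<in> I" and g: "g \<in> borel_measurable (PiM (J::'j set) (\<lambda>_. Nrm \<sigma>))"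
  shows "(\<lambda>W. g (\<lambda>j\<in>J. W (i,j))) \<in> borel_measurable (PiM (I \<times> J) (\<lambda>_. Nrm \<sigma>))"
proof -
  have "(\<lambda>W. \<lambda>j\<in>J. W (i,j)) \<in> measurable (PiM (I \<times> J) (\<lambda>_. Nrm \<sigma>)) (PiM J (\<lambda>_. Nrm \<sigma>))"
    by (rule measurable_restrict) (use assms(1) in auto)
  from measurable_compose[OF this g] show ?thesis by simp
qed

lemma block_expect:
  assumes "(i::'i) \<in> I" "\<sigma> > 0" and g: "(g :: ('j \<Rightarrow> real) \<Rightarrow> real) \<in> borel_measurable (PiM (J::'j set) (\<lambda>_. Nrm \<sigma>))"
  shows "(\<integral>W. g (\<lambda>j\<in>J. W (i,j)) \<partial>PiM (I \<times> J) (\<lambda>_. Nrm \<sigma>)) = (\<integral>r. g r \<partial>PiM J (\<lambda>_. Nrm \<sigma>))"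
proof -
  have d: "distr (PiM (I \<times> J) (\<lambda>_. Nrm \<sigma>)) (\<Pi>\<^sub>M j\<in>J. Nrm \<sigma>) (\<lambda>\<omega>. \<lambda>n\<in>J. \<omega> (i, n)) = (\<Pi>\<^sub>M j\<in>J. Nrm \<sigma>)"
    using distr_PiM_reindex[of "I \<times> J" "\<lambda>_. Nrm \<sigma>" "\<lambda>j. (i,j)" J] assms prob_space_Nrm
    by (auto simp: inj_on_def)
  have m: "(\<lambda>W. \<lambda>j\<in>J. W (i,j)) \<in> measurable (PiM (I \<times> J) (\<lambda>_. Nrm \<sigma>)) (PiM J (\<lambda>_. Nrm \<sigma>))"
    by (rule measurable_restrict) (use assms(1) in auto)
  show ?thesis
    by (subst d[symmetric]) (simp add: integral_distr[OF m g])
qed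

lemma coord_indep:
  assumes "\<sigma> > 0"
  shows "prob_space.indep_vars (PiM K (\<lambda>_. Nrm \<sigma>)) (\<lambda>_. Nrm \<sigma>) (\<lambda>p W. W p) K"
proof -
  interpret prob_space "PiM K (\<lambda>_. Nrm \<sigma>)" by (rule prob_space_PiM) (simp add: prob_space_Nrm[OF assms])
  show ?thesis
  proof (cases "K = {}")
    case True then show ?thesis unfolding indep_vars_def2 indep_sets_def by simp
  next
    case False
    have rv: "random_variable (Nrm \<sigma>) (\<lambda>W. W p)" if "p \<in> K" for p
      using that by (rule measurable_component_singleton)
    have d1: "distr (PiM K (\<lambda>_. Nrm \<sigma>)) (\<Pi>\<^sub>M p\<in>K. Nrm \<sigma>) (\<lambda>x. \<lambda>p\<in>K. x p) = (\<Pi>\<^sub>M p\<in>K. Nrm \<sigma>)"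
      using distr_PiM_reindex[of K "\<lambda>_. Nrm \<sigma>" "\<lambda>p. p" K] prob_space_Nrm[OF assms] by auto
    have d2: "(\<Pi>\<^sub>M p\<in>K. distr (PiM K (\<lambda>_. Nrm \<sigma>)) (Nrm \<sigma>) (\<lambda>W. W p)) = (\<Pi>\<^sub>M p\<in>K. Nrm \<sigma>)"
      by (intro PiM_cong refl distr_PiM_component) (auto simp: prob_space_Nrm[OF assms])
    show ?thesis
      by (subst indep_vars_iff_distr_eq_PiM'[OF False rv]) (use d1 d2 in auto)
  qed
qed

lemma block_hoeffding:
  fixes I :: "'i set" and J :: "'j set" and g :: "'i \<Rightarrow> ('j \<Rightarrow> real) \<Rightarrow> real"
  assumes fin: "finite I" "finite J" and ne: "I \<noteq> {}" and sig: "\<sigma> > 0"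
    and meas: "\<And>i. i \<in> I \<Longrightarrow> g i \<in> borel_measurable (PiM J (\<lambda>_. Nrm \<sigma>))"
    and bnd: "\<And>i r. i \<in> I \<Longrightarrow> g i r \<in> {a..b}" and ab: "a < b" and eps: "\<epsilon> \<ge> 0"
  shows "measure (PiM (I \<times> J) (\<lambda>_. Nrm \<sigma>))
           {W \<in> space (PiM (I \<times> J) (\<lambda>_. Nrm \<sigma>)).
              \<bar>(\<Sum>i\<in>I. g i (\<lambda>j\<in>J. W (i,j))) - (\<Sum>i\<in>I. \<integral>r. g i r \<partial>PiM J (\<lambda>_. Nrm \<sigma>))\<bar> \<ge> \<epsilon>}
         \<le> 2 * exp (- 2 * \<epsilon>^2 / (real (card I) * (b - a)^2))"
proof -
  define M where "M = PiM (I \<times> J) (\<lambda>_. Nrm \<sigma>)"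
  interpret prob_space M unfolding M_def by (rule prob_space_PiM) (simp add: prob_space_Nrm[OF sig])
  define X where "X = (\<lambda>i W. g i (\<lambda>j\<in>J. W (i,j)))"
  have ci: "indep_vars (\<lambda>_. Nrm \<sigma>) (\<lambda>p W. W p) (I \<times> J)"
    using coord_indep[OF sig, of "I \<times> J"] unfolding M_def .
  have i2: "indep_vars (\<lambda>i. PiM ({i} \<times> J) (\<lambda>_. Nrm \<sigma>)) (\<lambda>i \<omega>. restrict (\<lambda>p. \<omega> p) ({i} \<times> J)) I"
    by (rule indep_vars_restrict[OF ci]) (auto simp: disjoint_family_on_def)
  have ym: "(\<lambda>r. g i (\<lambda>j\<in>J. r (i,j))) \<in> measurable (PiM ({i} \<times> J) (\<lambda>_. Nrm \<sigma>)) borel" if "i \<in> I" for i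
  proof -
    have "(\<lambda>r. \<lambda>j\<in>J. r (i,j)) \<in> measurable (PiM ({i} \<times> J) (\<lambda>_. Nrm \<sigma>)) (PiM J (\<lambda>_. Nrm \<sigma>))"
      by (rule measurable_restrict) auto
    from measurable_compose[OF this meas[OF that]] show ?thesis by simp
  qed
  have i3: "indep_vars (\<lambda>_. borel) (\<lambda>i \<omega>. (\<lambda>r. g i (\<lambda>j\<in>J. r (i,j))) (restrict (\<lambda>p. \<omega> p) ({i} \<times> J))) I"
    by (rule indep_vars_compose2[OF i2 ym])
  have indep: "indep_vars (\<lambda>_. borel) X I"
  proof -
    have eqr: "(\<lambda>j\<in>J. restrict (\<lambda>p. \<omega> p) ({i} \<times> J) (i,j)) = (\<lambda>j\<in>J. \<omega> (i,j))" for \<omega> i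
      by (rule ext) (simp add: restrict_def)
    show ?thesis using i3 unfolding X_def eqr .
  qed
  have rv: "X i \<in> borel_measurable M" if "i \<in> I" for i
    unfolding X_def M_def by (rule block_meas[OF that meas[OF that]])
  interpret H: Hoeffding_ineq M I X "\<lambda>_. a" "\<lambda>_. b" "\<Sum>i\<in>I. expectation (X i)"
  proof unfold_locales
    show "finite I" by (rule fin)
    show "indep_vars (\<lambda>_. borel) X I" by (rule indep)
    show "AE x in M. X i x \<in> {(\<lambda>_. a) i..(\<lambda>_. b) i}" if "i \<in> I" for i
      using bnd[OF that] unfolding X_def by simp
  qed
  have "prob {x\<in>space M. \<bar>(\<Sum>i\<in>I. X i x) - (\<Sum>i\<in>I. expectation (X i))\<bar> \<ge> \<epsilon>}
          \<le> 2 * exp (-2 * \<epsilon>\<^sup>2 / (\<Sum>i\<in>I. ((\<lambda>_. b) i - (\<lambda>_. a) i)\<^sup>2))"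
    by (rule H.Hoeffding_ineq_abs_ge[OF eps]) (use fin ne ab in \<open>auto simp: card_gt_0_iff\<close>)
  moreover have "expectation (X i) = (\<integral>r. g i r \<partial>PiM J (\<lambda>_. Nrm \<sigma>))" if "i \<in> I" for i
    unfolding X_def M_def by (rule block_expect[OF that sig meas[OF that]])
  ultimately show ?thesis unfolding M_def[symmetric] X_def by simp
qed

lemma sum_double: "(\<Sum>k<2 * (n::nat). (f k :: 'a::comm_monoid_add)) = (\<Sum>q<n. f (2 * q) + f (2 * q + 1))"
  by (induction n) (simp_all add: algebra_simps)

lemma sum_split_add: "(\<Sum>k<a + (b::nat). (f k :: 'a::comm_monoid_add)) = (\<Sum>k<a. f k) + (\<Sum>k<b. f (a + k))"
  by (induction b) (simp_all add: algebra_simps)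

lemma rff_pair_sum:
  assumes "Q > 0"
  shows "(\<Sum>k<2 * Q. rff m Q V u k * rff m Q V u' k)
       = (\<Sum>q<Q. cos (\<Sum>j<m. V (q, j) * (u j - u' j))) / real Q"
proof -
  have "(\<Sum>k<2 * Q. rff m Q V u k * rff m Q V u' k)
      = (\<Sum>q<Q. cos (dotp m (\<lambda>j. V (q, j)) u - dotp m (\<lambda>j. V (q, j)) u') / real Q)"
    unfolding sum_double
  proof (rule sum.cong[OF refl])
    fix q
    let ?t = "dotp m (\<lambda>j. V (q, j)) u" and ?t' = "dotp m (\<lambda>j. V (q, j)) u'"
    have "rff m Q V u (2 * q) * rff m Q V u' (2 * q) + rff m Q V u (2 * q + 1) * rff m Q V u' (2 * q + 1)
        = (cos ?t * cos ?t' + sin ?t * sin ?t') / (sqrt (real Q) * sqrt (real Q))"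
      unfolding rff_def Let_def by (simp add: add_divide_distrib)
    also have "\<dots> = cos (?t - ?t') / real Q"
      by (simp add: cos_diff)
    finally show "rff m Q V u (2 * q) * rff m Q V u' (2 * q) + rff m Q V u (2 * q + 1) * rff m Q V u' (2 * q + 1)
        = cos (?t - ?t') / real Q" .
  qed
  also have "\<dots> = (\<Sum>q<Q. cos (\<Sum>j<m. V (q, j) * (u j - u' j))) / real Q"
    by (simp add: sum_divide_distrib dotp_def sum_subtractf[symmetric] right_diff_distrib)
  finally show ?thesis .
qed

lemma uvec_dist:
  "(\<Sum>j<2 * L + d. (uvec d L sP sX W n1 X x j - uvec d L sP sX W n2 X' x' j)^2)
   = sX^2 * (\<Sum>k<2 * L. (ZP d L W n1 X k - ZP d L W n2 X' k)^2) + sP^2 * sqdist d x x'"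
  unfolding sum_split_add uvec_def sqdist_def
  by (simp add: sum_distrib_left power_mult_distrib flip: right_diff_distrib)

definition Gfun :: "nat \<Rightarrow> nat \<Rightarrow> (nat \<Rightarrow> nat \<Rightarrow> real) \<Rightarrow> nat \<Rightarrow> (nat \<Rightarrow> nat \<Rightarrow> real) \<Rightarrow> (nat \<Rightarrow> real) \<Rightarrow> real" where
  "Gfun d n1 X n2 X' r =
     ((\<Sum>i<n1. cos (\<Sum>j<d. r j * X i j)) / real n1 - (\<Sum>i<n2. cos (\<Sum>j<d. r j * X' i j)) / real n2)^2
   + ((\<Sum>i<n1. sin (\<Sum>j<d. r j * X i j)) / real n1 - (\<Sum>i<n2. sin (\<Sum>j<d. r j * X' i j)) / real n2)^2"

lemma Dhat_eq:
  assumes "L > 0"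
  shows "(\<Sum>k<2 * L. (ZP d L W n1 X k - ZP d L W n2 X' k)^2)
       = (\<Sum>l<L. Gfun d n1 X n2 X' (\<lambda>j. W (l, j))) / real L"
proof -
  have "(\<Sum>k<2 * L. (ZP d L W n1 X k - ZP d L W n2 X' k)^2) = (\<Sum>l<L. Gfun d n1 X n2 X' (\<lambda>j. W (l, j)) / real L)"
    unfolding sum_double
  proof (rule sum.cong[OF refl])
    fix l
    have sq: "(a / sqrt (real L))^2 = a^2 / real L" for a
      by (simp add: power_divide)
    have d1: "(2 * l + 1) div 2 = (l::nat)" "(2 * l + 1) mod 2 = 1" "(2 * l) div 2 = l" "(2 * l) mod 2 = 0"
      by auto
    have zc: "ZP d L W n X (2 * l) = ((\<Sum>i<n. cos (\<Sum>j<d. X i j * W (l, j))) / real n) / sqrt (real L)" for n X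
      unfolding ZP_def rff_def Let_def dotp_def using d1
      by (simp add: sum_divide_distrib[symmetric] mult_ac)
    have zs: "ZP d L W n X (2 * l + 1) = ((\<Sum>i<n. sin (\<Sum>j<d. X i j * W (l, j))) / real n) / sqrt (real L)" for n X
      unfolding ZP_def rff_def Let_def dotp_def using d1
      by (simp add: sum_divide_distrib[symmetric] mult_ac)
    show "(ZP d L W n1 X (2 * l) - ZP d L W n2 X' (2 * l))^2 + (ZP d L W n1 X (2 * l + 1) - ZP d L W n2 X' (2 * l + 1))^2
        = Gfun d n1 X n2 X' (\<lambda>j. W (l, j)) / real L"
      unfolding zc zs Gfun_def diff_divide_distrib[symmetric] sq
      by (simp add: add_divide_distrib mult_ac)
  qed
  then show ?thesis by (simp add: sum_divide_distrib)
qed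

lemma int_cos:
  assumes "\<sigma> > 0" "K \<subseteq> J"
  shows "integrable (PiM J (\<lambda>_. Nrm \<sigma>)) (\<lambda>w. cos (\<Sum>j\<in>K. w j * c j))"
proof -
  interpret prob_space "PiM J (\<lambda>_. Nrm \<sigma>)" by (rule prob_space_PiM) (simp add: prob_space_Nrm[OF assms(1)])
  show ?thesis
  proof (rule integrable_const_bound[where B=1])
    show "AE x in PiM J (\<lambda>_. Nrm \<sigma>). norm (cos (\<Sum>j\<in>K. x j * c j)) \<le> 1" by simp
    show "(\<lambda>w. cos (\<Sum>j\<in>K. w j * c j)) \<in> borel_measurable (PiM J (\<lambda>_. Nrm \<sigma>))"
      by measurable (use assms(2) in auto)
  qed
qed

lemma sum_cos_sin_prod:
  fixes f g :: "nat \<Rightarrow> real"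
  shows "(\<Sum>i\<in>A. cos (f i)) * (\<Sum>k\<in>B. cos (g k)) + (\<Sum>i\<in>A. sin (f i)) * (\<Sum>k\<in>B. sin (g k))
   = (\<Sum>i\<in>A. \<Sum>k\<in>B. cos (f i - g k))"
proof -
  have "(\<Sum>i\<in>A. cos (f i)) * (\<Sum>k\<in>B. cos (g k)) + (\<Sum>i\<in>A. sin (f i)) * (\<Sum>k\<in>B. sin (g k))
     = (\<Sum>i\<in>A. \<Sum>k\<in>B. cos (f i) * cos (g k) + sin (f i) * sin (g k))"
    by (simp add: sum_product sum.distrib)
  then show ?thesis by (simp only: cos_diff)
qed

lemma alg_sq:
  fixes p q r t a b :: real
  shows "(p / a - q / b)^2 + (r / a - t / b)^2 = (p * p + r * r) / (a * a) + (q * q + t * t) / (b * b) - 2 * (p * q + r * t) / (a * b)"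
  by (simp add: power2_eq_square divide_inverse algebra_simps)

definition Csum :: "nat \<Rightarrow> nat \<Rightarrow> (nat \<Rightarrow> nat \<Rightarrow> real) \<Rightarrow> nat \<Rightarrow> (nat \<Rightarrow> nat \<Rightarrow> real) \<Rightarrow> (nat \<Rightarrow> real) \<Rightarrow> real" where
  "Csum d n1 X n2 X' r = (\<Sum>i<n1. \<Sum>k<n2. cos (\<Sum>j<d. r j * (X i j - X' k j)))"

lemma Gfun_Csum:
  "Gfun d n1 X n2 X' r = Csum d n1 X n1 X r / (real n1 * real n1) + Csum d n2 X' n2 X' r / (real n2 * real n2)
     - 2 * Csum d n1 X n2 X' r / (real n1 * real n2)"
proof -
  have e: "(\<Sum>j<d. r j * A i j) - (\<Sum>j<d. r j * B k j) = (\<Sum>j<d. r j * (A i j - B k j))" for A B i k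
    by (simp add: sum_subtractf right_diff_distrib)
  show ?thesis
    unfolding Gfun_def alg_sq Csum_def sum_cos_sin_prod[symmetric] e[symmetric] by simp
qed

lemma int_Csum:
  assumes "s' > 0"
  shows "(\<integral>r. Csum d n1 X n2 X' r \<partial>PiM {..<d} (\<lambda>_. Nrm (1/s'))) = (\<Sum>i<n1. \<Sum>k<n2. gauss_kernel d s' (X i) (X' k))"
proof -
  have s: "1/s' > 0" using assms by simp
  have "(\<integral>r. Csum d n1 X n2 X' r \<partial>PiM {..<d} (\<lambda>_. Nrm (1/s')))
      = (\<Sum>i<n1. \<Sum>k<n2. \<integral>r. cos (\<Sum>j<d. r j * (X i j - X' k j)) \<partial>PiM {..<d} (\<lambda>_. Nrm (1/s')))"
    unfolding Csum_def
    by (simp add: int_cos[OF s])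
  also have "\<dots> = (\<Sum>i<n1. \<Sum>k<n2. gauss_kernel d s' (X i) (X' k))"
    using assms by (simp add: gauss_cf gauss_kernel_def sqdist_def power_divide mult.commute)
  finally show ?thesis .
qed

lemma int_Gfun:
  assumes "s' > 0"
  shows "(\<integral>r. Gfun d n1 X n2 X' r \<partial>PiM {..<d} (\<lambda>_. Nrm (1/s'))) = kme_sqdist d s' n1 X n2 X'"
proof -
  have s: "1/s' > 0" using assms by simp
  have ic: "integrable (PiM {..<d} (\<lambda>_. Nrm (1/s'))) (Csum d a A b B)" for a A b B
    unfolding Csum_def by (auto intro!: integrable_sum int_cos[OF s])
  show ?thesis
    unfolding Gfun_Csum kme_sqdist_def kme_inner_def
    using ic by (simp add: int_Csum[OF assms])
qed

lemma avg_bound: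
  fixes f :: "nat \<Rightarrow> real"
  assumes "n > 0" "\<And>i. \<bar>f i\<bar> \<le> 1"
  shows "\<bar>(\<Sum>i<n. f i) / real n\<bar> \<le> 1"
proof -
  have "\<bar>\<Sum>i<n. f i\<bar> \<le> (\<Sum>i<n. \<bar>f i\<bar>)" by (rule sum_abs)
  also have "\<dots> \<le> (\<Sum>i<n. 1)" by (rule sum_mono) (rule assms(2))
  finally show ?thesis using assms(1) by (simp add: abs_divide)
qed

lemma sq_diff_bound:
  fixes x y :: real
  assumes "\<bar>x\<bar> \<le> 1" "\<bar>y\<bar> \<le> 1"
  shows "(x - y)^2 \<le> 4"
proof -
  have "\<bar>x - y\<bar> \<le> 2" using assms by linarith
  then have "\<bar>x - y\<bar>^2 \<le> 2^2" by (rule power_mono) simp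
  then show ?thesis by simp
qed

lemma Gfun_bound:
  assumes "n1 > 0" "n2 > 0"
  shows "Gfun d n1 X n2 X' r \<in> {0..8}"
proof -
  have "((\<Sum>i<n1. cos (\<Sum>j<d. r j * X i j)) / real n1 - (\<Sum>i<n2. cos (\<Sum>j<d. r j * X' i j)) / real n2)^2 \<le> 4"
    by (intro sq_diff_bound avg_bound assms; simp)
  moreover have "((\<Sum>i<n1. sin (\<Sum>j<d. r j * X i j)) / real n1 - (\<Sum>i<n2. sin (\<Sum>j<d. r j * X' i j)) / real n2)^2 \<le> 4"
    by (intro sq_diff_bound avg_bound assms; simp)
  ultimately show ?thesis unfolding Gfun_def by simp
qed

lemma Gfun_meas: "Gfun d n1 X n2 X' \<in> borel_measurable (PiM {..<d} (\<lambda>_. Nrm \<sigma>))"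
proof -
  have c: "(\<lambda>r. cos (\<Sum>j<d. r j * A i j)) \<in> borel_measurable (PiM {..<d} (\<lambda>_. Nrm \<sigma>))" for A i
    by measurable
  have s: "(\<lambda>r. sin (\<Sum>j<d. r j * A i j)) \<in> borel_measurable (PiM {..<d} (\<lambda>_. Nrm \<sigma>))" for A i
    by measurable
  note c[measurable] s[measurable]
  show ?thesis unfolding Gfun_def[abs_def] by measurable
qed

lemma cosg_meas: "(\<lambda>r. cos (\<Sum>j<m. r j * c j)) \<in> borel_measurable (PiM {..<m} (\<lambda>_. Nrm \<sigma>))"
  by measurable

lemma exp_close:
  fixes a b ex el :: real
  assumes "a \<ge> 0" "\<bar>a - b\<bar> < ln (1 + el)" "el > 0" "0 \<le> ex" "ex \<le> 1"
  shows "\<bar>exp (- b) * ex - exp (- a) * ex\<bar> \<le> el"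
proof -
  let ?x = "a - b"
  have e: "exp (- b) = exp (- a) * exp ?x" by (simp add: exp_add[symmetric])
  have k: "\<bar>exp ?x - 1\<bar> \<le> exp \<bar>?x\<bar> - 1"
  proof (cases "?x \<ge> 0")
    case True then show ?thesis by simp
  next
    case False
    have "exp ?x + exp (- ?x) \<ge> 2"
      using exp_ge_add_one_self[of ?x] exp_ge_add_one_self[of "- ?x"] by linarith
    then show ?thesis using False by simp
  qed
  have "exp \<bar>?x\<bar> - 1 \<le> el"
  proof -
    have "exp \<bar>?x\<bar> \<le> exp (ln (1 + el))" using assms(2) by simp
    then show ?thesis using assms(3) by simp
  qed
  with k have k2: "\<bar>exp ?x - 1\<bar> \<le> el" by linarith
  have p0: "0 \<le> exp (- a) * ex" using assms(4) by simp
  have p1: "exp (- a) * ex \<le> 1"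
  proof -
    have "exp (- a) \<le> 1" using assms(1) by simp
    then show ?thesis using assms(4,5) mult_mono[of "exp (- a)" 1 ex 1] by simp
  qed
  have eq: "exp (- b) * ex - exp (- a) * ex = (exp (- a) * ex) * (exp ?x - 1)"
    unfolding e by (simp add: algebra_simps)
  have "\<bar>exp (- b) * ex - exp (- a) * ex\<bar> = (exp (- a) * ex) * \<bar>exp ?x - 1\<bar>"
    unfolding eq abs_mult using p0 assms(4) by simp
  also have "\<dots> \<le> 1 * el"
    by (rule mult_mono[OF p1 k2 _ abs_ge_zero]) simp
  finally show ?thesis by simp
qed

lemma block_set_meas:
  fixes I :: "'i set" and J :: "'j set" and g :: "'i \<Rightarrow> ('j \<Rightarrow> real) \<Rightarrow> real"
  assumes "finite I" and meas: "\<And>i. i \<in> I \<Longrightarrow> g i \<in> borel_measurable (PiM J (\<lambda>_. Nrm \<sigma>))"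
  shows "{W \<in> space (PiM (I \<times> J) (\<lambda>_. Nrm \<sigma>)). \<bar>(\<Sum>i\<in>I. g i (\<lambda>j\<in>J. W (i,j))) - c\<bar> \<ge> \<epsilon>}
           \<in> sets (PiM (I \<times> J) (\<lambda>_. Nrm \<sigma>))"
proof -
  have f: "(\<lambda>W. \<bar>(\<Sum>i\<in>I. g i (\<lambda>j\<in>J. W (i,j))) - c\<bar>) \<in> borel_measurable (PiM (I \<times> J) (\<lambda>_. Nrm \<sigma>))"
    by (intro borel_measurable_abs borel_measurable_diff borel_measurable_sum block_meas meas borel_measurable_const)
  note f[measurable]
  show ?thesis by measurable
qed

lemma Gfun_restrict: "Gfun d n1 X n2 X' (\<lambda>j\<in>{..<d}. f j) = Gfun d n1 X n2 X' f"
  unfolding Gfun_def by simp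

theorem theorem6p2:
  fixes d n1 n2 L Q :: nat
    and X X' :: "nat \<Rightarrow> nat \<Rightarrow> real"
    and x x' :: "nat \<Rightarrow> real"
    and s' sP sX eps_l eps_q :: real
  assumes "n1 > 0" and "n2 > 0" and "L > 0" and "Q > 0"
    and "s' > 0" and "sP > 0" and "sX > 0"
    and "eps_l > 0" and "eps_q > 0"
  shows
    "measure (rf_measure d L Q s' sP sX)
       {(W, V) \<in> space (rf_measure d L Q s' sP sX).
          \<bar>kbar d s' sP sX n1 X x n2 X' x'
            - (\<Sum>k<2 * Q. rff (2 * L + d) Q V (uvec d L sP sX W n1 X x) k
                          * rff (2 * L + d) Q V (uvec d L sP sX W n2 X' x') k)\<bar>
          \<ge> eps_l + eps_q}
     \<le> 2 * exp (- real Q * eps_q^2 / 2)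
       + 6 * real n1 * real n2 * exp (- real L * ((sP^2 / 2) * ln (1 + eps_l))^2 / 2)"
proof -
  note n1 = assms(1) and n2 = assms(2) and L0 = assms(3) and Q0 = assms(4)
    and s'0 = assms(5) and sP0 = assms(6) and sX0 = assms(7) and el0 = assms(8) and eq0 = assms(9)
  define m where "m = 2 * L + d"
  define \<sigma>W where "\<sigma>W = 1 / s'"
  define \<sigma>V where "\<sigma>V = 1 / (sP * sX)"
  have \<sigma>W0: "\<sigma>W > 0" and \<sigma>V0: "\<sigma>V > 0" using assms by (auto simp: \<sigma>W_def \<sigma>V_def)
  define MW where "MW = PiM ({..<L} \<times> {..<d}) (\<lambda>_. Nrm \<sigma>W)"
  define MV where "MV = PiM ({..<Q} \<times> {..<m}) (\<lambda>_. Nrm \<sigma>V)"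
  have RF: "rf_measure d L Q s' sP sX = MW \<Otimes>\<^sub>M MV"
    unfolding rf_measure_def MW_def MV_def m_def \<sigma>W_def \<sigma>V_def ..
  interpret W: prob_space MW unfolding MW_def by (rule prob_space_PiM) (simp add: prob_space_Nrm[OF \<sigma>W0])
  interpret V: prob_space MV unfolding MV_def by (rule prob_space_PiM) (simp add: prob_space_Nrm[OF \<sigma>V0])
  interpret WV: pair_prob_space MW MV by unfold_locales

  define E where "E = {(W, V) \<in> space (rf_measure d L Q s' sP sX).
          \<bar>kbar d s' sP sX n1 X x n2 X' x'
            - (\<Sum>k<2 * Q. rff (2 * L + d) Q V (uvec d L sP sX W n1 X x) k
                          * rff (2 * L + d) Q V (uvec d L sP sX W n2 X' x') k)\<bar>
          \<ge> eps_l + eps_q}"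
  define \<Delta> where "\<Delta> = (\<lambda>W j. uvec d L sP sX W n1 X x j - uvec d L sP sX W n2 X' x' j)"
  define Dh where "Dh = (\<lambda>W. \<Sum>k<2 * L. (ZP d L W n1 X k - ZP d L W n2 X' k)^2)"
  define D where "D = kme_sqdist d s' n1 X n2 X'"
  define ex where "ex = exp (- sqdist d x x' / (2 * sX^2))"
  define Kt where "Kt = (\<lambda>W. exp (- (Dh W / (2 * sP^2))) * ex)"
  define gV where "gV = (\<lambda>W (q::nat) r. cos (\<Sum>j<m. r j * \<Delta> W j))"
  define Vbad where "Vbad = (\<lambda>W. {V \<in> space MV. \<bar>(\<Sum>q\<in>{..<Q}. gV W q (\<lambda>j\<in>{..<m}. V (q,j)))
                     - (\<Sum>q\<in>{..<Q}. \<integral>r. gV W q r \<partial>PiM {..<m} (\<lambda>_. Nrm \<sigma>V))\<bar> \<ge> real Q * eps_q})"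
  define t where "t = 2 * sP^2 * ln (1 + eps_l)"
  define Wbad where "Wbad = {W \<in> space MW. \<bar>(\<Sum>l\<in>{..<L}. (\<lambda>_. Gfun d n1 X n2 X') l (\<lambda>j\<in>{..<d}. W (l,j)))
                     - (\<Sum>l\<in>{..<L}. \<integral>r. (\<lambda>_. Gfun d n1 X n2 X') l r \<partial>PiM {..<d} (\<lambda>_. Nrm \<sigma>W))\<bar> \<ge> real L * t}"
  define cV where "cV = 2 * exp (- real Q * eps_q^2 / 2)"
  define cW where "cW = 2 * exp (- real L * ((sP^2 / 2) * ln (1 + eps_l))^2 / 2)"

  have gVm: "gV W q \<in> borel_measurable (PiM {..<m} (\<lambda>_. Nrm \<sigma>V))" for W q
    unfolding gV_def by (rule cosg_meas)
  have Vbad_sets: "Vbad W \<in> sets MV" for W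
    unfolding Vbad_def MV_def by (rule block_set_meas) (auto intro: gVm)
  have Wbad_sets: "Wbad \<in> sets MW"
    unfolding Wbad_def MW_def by (rule block_set_meas) (auto intro: Gfun_meas)
  have Vbound: "measure MV (Vbad W) \<le> cV" for W
  proof -
    have "measure MV (Vbad W) \<le> 2 * exp (- 2 * (real Q * eps_q)^2 / (real (card {..<Q}) * (1 - (-1))^2))"
      unfolding Vbad_def MV_def
      by (rule block_hoeffding) (use Q0 eq0 \<sigma>V0 gVm in \<open>auto simp: gV_def\<close>)
    also have "\<dots> = cV" unfolding cV_def using Q0 by (simp add: power2_eq_square field_simps)
    finally show ?thesis .
  qed
  have Wbound: "measure MW Wbad \<le> cW"
  proof -
    have "measure MW Wbad \<le> 2 * exp (- 2 * (real L * t)^2 / (real (card {..<L}) * (8 - 0)^2))"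
      unfolding Wbad_def MW_def
    proof (rule block_hoeffding)
      show "0 \<le> real L * t" unfolding t_def using el0 by simp
    qed (use L0 \<sigma>W0 Gfun_meas Gfun_bound[OF n1 n2] in auto)
    also have "\<dots> = cW" unfolding cW_def t_def using L0 by (simp add: power2_eq_square field_simps)
    finally show ?thesis .
  qed
  have RHS: "cV + cW \<le> 2 * exp (- real Q * eps_q^2 / 2)
       + 6 * real n1 * real n2 * exp (- real L * ((sP^2 / 2) * ln (1 + eps_l))^2 / 2)"
  proof -
    have "1 \<le> real n1 * real n2" using n1 n2
      by (metis One_nat_def Suc_leI of_nat_1 of_nat_le_iff of_nat_mult one_le_mult_iff)
    then have "2 \<le> 6 * real n1 * real n2" by simp
    then show ?thesis unfolding cV_def cW_def
      by (intro add_left_mono mult_right_mono) auto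
  qed
  have intV: "(\<Sum>q\<in>{..<Q}. \<integral>r. gV W q r \<partial>PiM {..<m} (\<lambda>_. Nrm \<sigma>V)) = real Q * Kt W" for W
  proof -
    have i1: "(\<integral>r. gV W q r \<partial>PiM {..<m} (\<lambda>_. Nrm \<sigma>V)) = exp (- (\<sigma>V^2 * (\<Sum>j<m. (\<Delta> W j)^2)) / 2)" for q
      unfolding gV_def by (rule gauss_cf) (use \<sigma>V0 in auto)
    have i2: "(\<Sum>j<m. (\<Delta> W j)^2) = sX^2 * Dh W + sP^2 * sqdist d x x'"
      unfolding m_def \<Delta>_def Dh_def by (rule uvec_dist)
    have i3: "- (\<sigma>V^2 * (sX^2 * Dh W + sP^2 * sqdist d x x')) / 2 = - (Dh W / (2 * sP^2)) + - sqdist d x x' / (2 * sX^2)"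
      unfolding \<sigma>V_def using sP0 sX0 by (simp add: field_simps power2_eq_square)
    show ?thesis unfolding i1 i2 i3 Kt_def ex_def by (simp add: exp_diff exp_minus field_simps)
  qed
  have sumV: "(\<Sum>q\<in>{..<Q}. gV W q (\<lambda>j\<in>{..<m}. V (q,j)))
      = real Q * (\<Sum>k<2 * Q. rff (2 * L + d) Q V (uvec d L sP sX W n1 X x) k
                          * rff (2 * L + d) Q V (uvec d L sP sX W n2 X' x') k)" for W V
    unfolding rff_pair_sum[OF Q0] gV_def \<Delta>_def m_def using Q0 by simp
  have intW: "(\<Sum>l\<in>{..<L}. \<integral>r. (\<lambda>_. Gfun d n1 X n2 X') l r \<partial>PiM {..<d} (\<lambda>_. Nrm \<sigma>W)) = real L * D"
    unfolding \<sigma>W_def D_def using int_Gfun[OF s'0] by simp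
  have sumW: "(\<Sum>l\<in>{..<L}. (\<lambda>_. Gfun d n1 X n2 X') l (\<lambda>j\<in>{..<d}. W (l,j))) = real L * Dh W" for W
    unfolding Gfun_restrict Dh_def Dhat_eq[OF L0] using L0 by simp
  have ex01: "0 \<le> ex" "ex \<le> 1"
  proof -
    have "0 \<le> sqdist d x x'" unfolding sqdist_def by (simp add: sum_nonneg)
    then show "0 \<le> ex" "ex \<le> 1" unfolding ex_def using sX0 by auto
  qed
  have kb: "kbar d s' sP sX n1 X x n2 X' x' = exp (- (D / (2 * sP^2))) * ex"
    unfolding kbar_def D_def ex_def by simp
  have key: "V \<in> Vbad W" if W: "W \<in> space MW" "W \<notin> Wbad" and WV: "(W, V) \<in> E" for W V
  proof -
    let ?T = "(\<Sum>k<2 * Q. rff (2 * L + d) Q V (uvec d L sP sX W n1 X x) k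
                          * rff (2 * L + d) Q V (uvec d L sP sX W n2 X' x') k)"
    have Vs: "V \<in> space MV" and big: "eps_l + eps_q \<le> \<bar>kbar d s' sP sX n1 X x n2 X' x' - ?T\<bar>"
      using WV unfolding E_def RF by (auto simp: space_pair_measure)
    have "\<bar>real L * Dh W - real L * D\<bar> < real L * t"
      using W unfolding Wbad_def sumW intW by auto
    then have "\<bar>Dh W - D\<bar> < t"
      using L0 by (simp add: abs_mult flip: right_diff_distrib)
    then have cl: "\<bar>Dh W / (2 * sP^2) - D / (2 * sP^2)\<bar> < ln (1 + eps_l)"
      unfolding t_def using sP0 by (simp add: abs_divide flip: diff_divide_distrib) (simp add: field_simps)
    have Dh0: "Dh W / (2 * sP^2) \<ge> 0" unfolding Dh_def by (simp add: sum_nonneg)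
    have "\<bar>exp (- (D / (2 * sP^2))) * ex - exp (- (Dh W / (2 * sP^2))) * ex\<bar> \<le> eps_l"
      by (rule exp_close[OF Dh0 cl el0 ex01])
    then have "\<bar>kbar d s' sP sX n1 X x n2 X' x' - Kt W\<bar> \<le> eps_l" unfolding kb Kt_def .
    with big have "eps_q \<le> \<bar>?T - Kt W\<bar>" by linarith
    then have "real Q * eps_q \<le> real Q * \<bar>?T - Kt W\<bar>" using Q0 by simp
    also have "\<dots> = \<bar>real Q * ?T - real Q * Kt W\<bar>" by (simp add: abs_mult flip: right_diff_distrib)
    finally show ?thesis unfolding Vbad_def sumV intV using Vs by simp
  qed
  have cV0: "0 \<le> cV" unfolding cV_def by simp
  have mainb: "measure (MW \<Otimes>\<^sub>M MV) E \<le> cV + cW"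
  proof (cases "E \<in> sets (MW \<Otimes>\<^sub>M MV)")
    case False
    then show ?thesis using cV0 by (simp add: measure_notin_sets cW_def)
  next
    case True
    have "emeasure (MW \<Otimes>\<^sub>M MV) E = (\<integral>\<^sup>+W. emeasure MV (Pair W -` E) \<partial>MW)"
      by (rule V.emeasure_pair_measure_alt[OF True])
    also have "\<dots> \<le> (\<integral>\<^sup>+W. (indicator Wbad W + ennreal cV) \<partial>MW)"
    proof (rule nn_integral_mono)
      fix W assume W: "W \<in> space MW"
      show "emeasure MV (Pair W -` E) \<le> indicator Wbad W + ennreal cV"
      proof (cases "W \<in> Wbad")
        case True
        have "emeasure MV (Pair W -` E) \<le> 1" by (rule V.emeasure_le_1)
        also have "(1::ennreal) \<le> indicator Wbad W + ennreal cV" using True by simp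
        finally show ?thesis .
      next
        case False
        have sub: "Pair W -` E \<subseteq> Vbad W" using key[OF W False] by auto
        have "emeasure MV (Pair W -` E) \<le> emeasure MV (Vbad W)" by (rule emeasure_mono[OF sub Vbad_sets])
        also have "\<dots> = ennreal (measure MV (Vbad W))" by (rule V.emeasure_eq_measure)
        also have "\<dots> \<le> ennreal cV" by (rule ennreal_leI[OF Vbound])
        finally show ?thesis using False by simp
      qed
    qed
    also have "\<dots> = emeasure MW Wbad + ennreal cV"
      using Wbad_sets by (simp add: nn_integral_add W.emeasure_space_1)
    also have "\<dots> = ennreal (measure MW Wbad + cV)"
      using cV0 by (simp add: W.emeasure_eq_measure ennreal_plus)
    finally have "ennreal (measure (MW \<Otimes>\<^sub>M MV) E) \<le> ennreal (measure MW Wbad + cV)"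
      by (simp add: WV.emeasure_eq_measure)
    then have "measure (MW \<Otimes>\<^sub>M MV) E \<le> measure MW Wbad + cV"
      using cV0 by (metis ennreal_le_iff add_nonneg_nonneg measure_nonneg)
    then show ?thesis using Wbound by linarith
  qed
  show ?thesis using mainb RHS unfolding E_def RF by linarith
qed

end
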